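(* Every strongly $n$-torsion clean ring is Dedekind finite (i.e. $ab=1$ implies $ba=1$).
   Context: All rings are associative with identity. A ring $R$ is strongly $n$-torsion clean if every $r\in R$ can be written $r=e+u$ with $e^2=e$, $u$ a unit, $u^n=1$ and $eu=ue$, and $n$ is the smallest natural number with this property. *)

theory Defs
  imports Main
begin

definition is_unit_r :: "'a::ring_1 \<Rightarrow> bool" where
  "is_unit_r u \<longleftrightarrow> (\<exists>v. u * v = 1 \<and> v * u = 1)"

definition torsion_clean_with :: "nat \<Rightarrow> 'a::ring_1 itself \<Rightarrow> bool" where
  "torsion_clean_with n _ \<longleftrightarrow>
     (\<forall>r::'a. \<exists>e u. e * e = e \<and> is_unit_r u \<and> u ^ n = 1 \<and> e * u = u * e \<and> r = e + u)"

definition strongly_torsion_clean :: "nat \<Rightarrow> 'a::ring_1 itself \<Rightarrow> bool" where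
  "strongly_torsion_clean n T \<longleftrightarrow>
     1 \<le> n \<and> torsion_clean_with n T \<and> (\<forall>m. 1 \<le> m \<and> m < n \<longrightarrow> \<not> torsion_clean_with m T)"

end

theory Submission
  imports Defs
begin

lemma pw_comm:
  fixes x y :: "'a::ring_1"
  assumes "x * y = y * x"
  shows "x * y ^ k = y ^ k * x"
  using assms
  by (induction k) (simp, metis mult.assoc power_Suc2)

lemma left_part:
  fixes e u :: "'a::ring_1"
  assumes ee: "e * e = e" and eu: "e * u = u * e"
  shows "(1 - e) * (e + u) ^ k = (1 - e) * u ^ k"
proof (induction k)
  case 0 then show ?case by simp
next
  case (Suc k)
  have c: "u ^ k * e = e * u ^ k" using pw_comm[OF eu] by simp
  have "(1 - e) * (e + u) ^ Suc k = ((1 - e) * (e + u) ^ k) * (e + u)"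
    by (metis power_Suc2 mult.assoc)
  also have "\<dots> = (1 - e) * u ^ k * e + (1 - e) * u ^ Suc k"
    using Suc by (simp add: distrib_left mult.assoc power_Suc2 power_commutes)
  also have "(1 - e) * u ^ k * e = 0"
    by (simp add: mult.assoc c, simp add: algebra_simps ee flip: mult.assoc)
  finally show ?case by simp
qed

lemma right_part:
  fixes e u :: "'a::ring_1"
  assumes ee: "e * e = e" and eu: "e * u = u * e"
  shows "e * (e + u - 1) ^ k = e * u ^ k"
proof (induction k)
  case 0 then show ?case by simp
next
  case (Suc k)
  have c: "u ^ k * e = e * u ^ k" using pw_comm[OF eu] by simp
  have "e * (e + u - 1) ^ Suc k = (e * (e + u - 1) ^ k) * (e + u - 1)"
    by (metis power_Suc2 mult.assoc)
  also have "\<dots> = e * u ^ k * e + e * u ^ Suc k - e * u ^ k"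
    using Suc by (simp add: algebra_simps mult.assoc power_Suc2 power_commutes)
  also have "e * u ^ k * e = e * u ^ k"
    by (simp add: mult.assoc c, simp add: ee flip: mult.assoc)
  finally show ?case by simp
qed

lemma rev_pow:
  fixes a b :: "'a::ring_1"
  assumes ab: "a * b = 1"
  shows "a ^ k * b ^ k = 1"
proof (induction k)
  case 0 then show ?case by simp
next
  case (Suc k)
  have "a ^ Suc k * b ^ Suc k = a ^ k * (a * b) * b ^ k"
    by (metis power_Suc power_Suc2 mult.assoc)
  then show ?case using Suc ab by simp
qed

lemma rev_pow1:
  fixes a b :: "'a::ring_1"
  assumes ab: "a * b = 1"
  shows "(a - 1) ^ k * b ^ k = (1 - b) ^ k"
proof (induction k)
  case 0 then show ?case by simp
next
  case (Suc k)
  have ab1: "(a - 1) * b = 1 - b" using ab by (simp add: algebra_simps)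
  have cb: "(1 - b) * b ^ k = b ^ k * (1 - b)"
    by (simp add: algebra_simps power_commutes)
  have "(a - 1) ^ Suc k * b ^ Suc k = (a - 1) ^ k * ((a - 1) * b) * b ^ k"
    by (metis power_Suc power_Suc2 mult.assoc)
  also have "\<dots> = (a - 1) ^ k * b ^ k * (1 - b)"
    using ab1 cb by (simp add: mult.assoc)
  finally show ?case using Suc by (simp add: power_Suc2 del: power_Suc)
qed

lemma one_minus_pow:
  fixes b :: "'a::ring_1"
  shows "\<exists>W. W * b = b * W \<and> (1 - b) ^ k = 1 - b * W"
proof (induction k)
  case 0 then show ?case by (intro exI[of _ 0]) simp
next
  case (Suc k)
  then obtain W where W: "W * b = b * W" "(1 - b) ^ k = 1 - b * W" by blast
  have "(1 - b) ^ Suc k = (1 - b * W) * (1 - b)" using W by (simp add: power_Suc2 del: power_Suc)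
  also have "\<dots> = 1 - b * (W + 1 - W * b)"
    using W by (simp add: algebra_simps mult.assoc)
  finally have h: "(1 - b) ^ Suc k = 1 - b * (W + 1 - W * b)" .
  have "(W + 1 - W * b) * b = b * (W + 1 - W * b)"
    using W by (simp add: algebra_simps mult.assoc)
  with h show ?case by blast
qed

lemma pow_form:
  fixes b :: "'a::ring_1" assumes "n \<ge> 1"
  shows "\<exists>W. W * b = b * W \<and> b ^ n = b * W"
proof -
  obtain m where m: "n = Suc m" using assms by (cases n) auto
  show ?thesis using m by (intro exI[of _ "b ^ m"]) (simp add: power_commutes)
qed

theorem corollary2p5:
  fixes a b :: "'a::ring_1" and n :: nat
  assumes "strongly_torsion_clean n TYPE('a)"
    and "a * b = 1"
  shows "b * a = 1"
proof -
  have n1: "n \<ge> 1" and tc: "torsion_clean_with n TYPE('a)"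
    using assms(1) unfolding strongly_torsion_clean_def by auto
  obtain e u where ee: "e * e = e" and un: "u ^ n = 1" and eu: "e * u = u * e"
    and a: "a = e + u"
    using tc unfolding torsion_clean_with_def by blast
  have ae: "a * e = e * a" using a eu ee by (simp add: algebra_simps)
  have L: "(1 - e) * (a ^ n - 1) = 0"
    using left_part[OF ee eu, of n] un a by (simp add: algebra_simps)
  have R: "e * ((a - 1) ^ n - 1) = 0"
    using right_part[OF ee eu, of n] un a by (simp add: algebra_simps)
  have cn: "(a ^ n - 1) * (1 - e) = (1 - e) * (a ^ n - 1)"
    using pw_comm[of e a n] ae by (simp add: algebra_simps)
  have P: "(a ^ n - 1) * ((a - 1) ^ n - 1) = 0"
  proof -
    have "(a ^ n - 1) * ((a - 1) ^ n - 1)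
        = (a ^ n - 1) * (1 - e) * ((a - 1) ^ n - 1) + (a ^ n - 1) * (e * ((a - 1) ^ n - 1))"
      by (simp add: algebra_simps)
    also have "\<dots> = 0" using L R cn by simp
    finally show ?thesis .
  qed
  have B1: "((a - 1) ^ n - 1) * b ^ n = (1 - b) ^ n - b ^ n"
    using rev_pow1[OF assms(2), of n] by (simp add: algebra_simps)
  have B2: "(a ^ n - 1) * b ^ n = 1 - b ^ n"
    using rev_pow[OF assms(2), of n] by (simp add: algebra_simps)
  have cbb: "((1 - b) ^ n - b ^ n) * b ^ n = b ^ n * ((1 - b) ^ n - b ^ n)"
  proof -
    have c1: "b * (1 - b) = (1 - b) * b" by (simp add: algebra_simps)
    have c2: "b * (1 - b) ^ n = (1 - b) ^ n * b" using pw_comm[OF c1] .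
    have c3: "((1 - b) ^ n - b ^ n) * b = b * ((1 - b) ^ n - b ^ n)"
      using c2 by (simp add: algebra_simps power_commutes)
    show ?thesis using pw_comm[OF c3, of n] by simp
  qed
  have X: "(1 - b ^ n) * ((1 - b) ^ n - b ^ n) = 0"
  proof -
    have "0 = (a ^ n - 1) * ((a - 1) ^ n - 1) * (b ^ n * b ^ n)" using P by simp
    also have "\<dots> = (a ^ n - 1) * (((a - 1) ^ n - 1) * b ^ n) * b ^ n"
      by (simp add: mult.assoc)
    also have "\<dots> = (a ^ n - 1) * b ^ n * ((1 - b) ^ n - b ^ n)"
      using B1 cbb by (simp add: mult.assoc)
    also have "\<dots> = (1 - b ^ n) * ((1 - b) ^ n - b ^ n)" using B2 by simp
    finally show ?thesis by simp
  qed
  obtain V where V: "V * b = b * V" "b ^ n = b * V" using pow_form[OF n1] by blast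
  obtain W where W: "W * b = b * W" "(1 - b) ^ n = 1 - b * W" using one_minus_pow by blast
  define T where "T = V + W + V - V * (b * W) - V * (b * V)"
  have "(1 - b ^ n) * ((1 - b) ^ n - b ^ n) = (1 - b * V) * (1 - b * W - b * V)"
    using V W by simp
  also have "\<dots> = 1 - b * T"
    unfolding T_def by (simp add: algebra_simps)
  finally have bT: "b * T = 1" using X by simp
  have Tb: "T * b = 1"
  proof -
    have v1: "V * (b * W) * b = b * (V * (b * W))"
      by (metis V(1) W(1) mult.assoc)
    have v2: "V * (b * V) * b = b * (V * (b * V))"
      by (metis V(1) mult.assoc)
    have "T * b = b * T" unfolding T_def using V(1) W(1) v1 v2
      by (simp add: algebra_simps)
    then show ?thesis using bT by simp
  qed
  have "a = T" using assms(2) Tb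
    by (metis mult.assoc mult_1_left bT mult_1_right)
  then show ?thesis using bT by simp
qed

end
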